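(* Let $X$ be a complex vector space with $\dim_{\mathbb{C}}X\ge2$ and $Y\ne\{0\}$ a sequentially complete Hausdorff complex locally convex space. Let $\Omega\subset X$ be a polygonally connected $2$-open set, $f\in\mathcal{H}_G(\Omega,Y)$, and $p$ a continuous seminorm on $Y$ with $p\not\equiv0$. If $c\in\Omega$ is a $\tau_{(1)}$-local maximum of $p\circ f$, then $c$ is a global minimum of $p\circ f$ on $\Omega$ and the closure of $f(\Omega)$ has empty interior in $Y$. In particular, if $p(f(c))>0$ then $0\notin f(\Omega)$.
   Context: $\Gamma_{1,d}(X)$: complex affine subspaces of $X$ of dimension $1,\dots,d$, with Euclidean topology. $A\subset X$ is $d$-open if $A\cap L$ is open in $L$ for all $L\in\Gamma_{1,d}(X)$. $\tau_{(1)}$ is the topology on $X$ whose open sets are the $1$-open sets. Polygonally connected: any two points can be joined by a polygonal chain within the set. $\mathcal{H}_G(\Omega,Y)$: Gâteaux holomorphic maps, i.e. for all $a\in\Omega$, $v\in X$, $\varphi\in Y^*$, $\lambda\mapsto\varphi(f(a+\lambda v))$ is holomorphic on some disc around $0$. *)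

theory Defs
  imports "HOL-Analysis.Analysis"
begin

definition seminorm_on :: "(complex \<Rightarrow> 'y \<Rightarrow> 'y) \<Rightarrow> ('y::ab_group_add \<Rightarrow> real) \<Rightarrow> bool" where
  "seminorm_on sY p \<longleftrightarrow>
     (\<forall>y. 0 \<le> p y) \<and> (\<forall>c y. p (sY c y) = cmod c * p y) \<and> (\<forall>y z. p (y + z) \<le> p y + p z)"

definition lcs_topology :: "'i set \<Rightarrow> ('i \<Rightarrow> 'y::ab_group_add \<Rightarrow> real) \<Rightarrow> 'y topology" where
  "lcs_topology I P = topology (\<lambda>U. \<forall>y\<in>U. \<exists>F e. finite F \<and> F \<subseteq> I \<and> e > 0 \<and>
        {z. \<forall>i\<in>F. P i (z - y) < e} \<subseteq> U)"

definition lcs :: "(complex \<Rightarrow> 'y \<Rightarrow> 'y) \<Rightarrow> 'i set \<Rightarrow> ('i \<Rightarrow> 'y::ab_group_add \<Rightarrow> real) \<Rightarrow> bool" where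
  "lcs sY I P \<longleftrightarrow> Vector_Spaces.vector_space sY \<and> (\<forall>i\<in>I. seminorm_on sY (P i))"

definition seq_complete_lcs :: "'i set \<Rightarrow> ('i \<Rightarrow> 'y::ab_group_add \<Rightarrow> real) \<Rightarrow> bool" where
  "seq_complete_lcs I P \<longleftrightarrow>
     (\<forall>s :: nat \<Rightarrow> 'y. (\<forall>i\<in>I. \<forall>e>0. \<exists>N. \<forall>m\<ge>N. \<forall>n\<ge>N. P i (s m - s n) < e)
        \<longrightarrow> (\<exists>l. limitin (lcs_topology I P) s l sequentially))"

definition dual_space :: "(complex \<Rightarrow> 'y \<Rightarrow> 'y) \<Rightarrow> 'i set \<Rightarrow> ('i \<Rightarrow> 'y::ab_group_add \<Rightarrow> real)
     \<Rightarrow> ('y \<Rightarrow> complex) set" where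
  "dual_space sY I P = {\<phi>. Vector_Spaces.linear sY (*) \<phi> \<and>
       continuous_map (lcs_topology I P) euclidean \<phi>}"

definition one_open :: "(complex \<Rightarrow> 'x \<Rightarrow> 'x) \<Rightarrow> ('x::ab_group_add) set \<Rightarrow> bool" where
  "one_open sX A \<longleftrightarrow> (\<forall>a v. v \<noteq> 0 \<longrightarrow> open {z::complex. a + sX z v \<in> A})"

definition two_open :: "(complex \<Rightarrow> 'x \<Rightarrow> 'x) \<Rightarrow> ('x::ab_group_add) set \<Rightarrow> bool" where
  "two_open sX A \<longleftrightarrow> one_open sX A \<and>
     (\<forall>a u v. u \<noteq> v \<and> \<not> module.dependent sX {u, v} \<longrightarrow>
        open {w::complex \<times> complex. a + sX (fst w) u + sX (snd w) v \<in> A})"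

definition polygonally_connected :: "(complex \<Rightarrow> 'x \<Rightarrow> 'x) \<Rightarrow> ('x::ab_group_add) set \<Rightarrow> bool" where
  "polygonally_connected sX A \<longleftrightarrow>
     (\<forall>x\<in>A. \<forall>y\<in>A. \<exists>xs. xs \<noteq> [] \<and> hd xs = x \<and> last xs = y \<and>
        (\<forall>k < length xs - 1. \<forall>t::real. 0 \<le> t \<and> t \<le> 1 \<longrightarrow>
            xs ! k + sX (complex_of_real t) (xs ! Suc k - xs ! k) \<in> A))"

definition gateaux_holomorphic ::
  "(complex \<Rightarrow> 'x \<Rightarrow> 'x) \<Rightarrow> (complex \<Rightarrow> 'y \<Rightarrow> 'y) \<Rightarrow> 'i set \<Rightarrow> ('i \<Rightarrow> 'y::ab_group_add \<Rightarrow> real)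
     \<Rightarrow> ('x::ab_group_add) set \<Rightarrow> ('x \<Rightarrow> 'y) \<Rightarrow> bool" where
  "gateaux_holomorphic sX sY I P \<Omega> f \<longleftrightarrow>
     (\<forall>a\<in>\<Omega>. \<forall>v. \<forall>\<phi>\<in>dual_space sY I P. \<exists>r>0. (\<forall>z\<in>ball 0 r. a + sX z v \<in> \<Omega>) \<and>
        (\<lambda>z. \<phi> (f (a + sX z v))) holomorphic_on ball 0 r)"

end

theory Submission
  imports Defs "HOL-Complex_Analysis.Complex_Analysis"
begin


lemma vs_cmul: "Vector_Spaces.vector_space ((*) :: complex \<Rightarrow> complex \<Rightarrow> complex)"
  by (simp add: vector_space_def module_def algebra_simps)

locale hb = vector_space sY for sY :: "complex \<Rightarrow> 'y::ab_group_add \<Rightarrow> 'y" +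
  fixes p :: "'y \<Rightarrow> real"
  assumes sn: "seminorm_on sY p"
begin

lemma p_nonneg: "0 \<le> p y" using sn by (simp add: seminorm_on_def)
lemma p_scale: "p (sY c y) = cmod c * p y" using sn by (simp add: seminorm_on_def)
lemma p_tri: "p (y + z) \<le> p y + p z" using sn by (simp add: seminorm_on_def)
lemma p_zero: "p 0 = 0" using p_scale[of 0 0] by simp
lemma p_real: "p (sY (of_real r) y) = \<bar>r\<bar> * p y" by (simp add: p_scale)

definition GG :: "'y \<Rightarrow> ('y \<times> real) set set" where
 "GG y1 = {G. (\<forall>x a b. (x,a)\<in>G \<longrightarrow> (x,b)\<in>G \<longrightarrow> a = b)
   \<and> (\<forall>x a y b. (x,a)\<in>G \<longrightarrow> (y,b)\<in>G \<longrightarrow> (x+y,a+b)\<in>G)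
   \<and> (\<forall>x a r. (x,a)\<in>G \<longrightarrow> (sY (of_real r) x, r*a)\<in>G)
   \<and> (\<forall>x a. (x,a)\<in>G \<longrightarrow> a \<le> p x) \<and> (y1, p y1) \<in> G}"

lemma G0_in: "range (\<lambda>r. (sY (of_real r) y1, r * p y1)) \<in> GG y1"
proof -
  have f: "a = b" if "sY (of_real r) y1 = sY (of_real s) y1" "a = r * p y1" "b = s * p y1" for r s a b
  proof -
    have "sY (of_real (r - s)) y1 = 0" using that(1) by (simp add: scale_left_diff_distrib)
    then have "r = s \<or> y1 = 0" by simp
    then show ?thesis using that p_zero by auto
  qed
  show ?thesis unfolding GG_def
  proof (intro CollectI conjI allI impI)
    show "(y1, p y1) \<in> range (\<lambda>r. (sY (of_real r) y1, r * p y1))"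
      by (rule range_eqI[of _ _ 1]) simp
  next
    fix x a b assume "(x,a) \<in> range (\<lambda>r. (sY (of_real r) y1, r * p y1))"
      "(x,b) \<in> range (\<lambda>r. (sY (of_real r) y1, r * p y1))"
    then show "a = b" using f by auto
  next
    fix x a y b assume "(x,a) \<in> range (\<lambda>r. (sY (of_real r) y1, r * p y1))"
      "(y,b) \<in> range (\<lambda>r. (sY (of_real r) y1, r * p y1))"
    then obtain r s where "x = sY (of_real r) y1" "a = r * p y1" "y = sY (of_real s) y1" "b = s * p y1" by auto
    then show "(x+y, a+b) \<in> range (\<lambda>r. (sY (of_real r) y1, r * p y1))"
      by (intro range_eqI[of _ _ "r+s"]) (simp add: scale_left_distrib distrib_right)
  next
    fix x a r assume "(x,a) \<in> range (\<lambda>r. (sY (of_real r) y1, r * p y1))"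
    then obtain s where "x = sY (of_real s) y1" "a = s * p y1" by auto
    then show "(sY (of_real r) x, r*a) \<in> range (\<lambda>r. (sY (of_real r) y1, r * p y1))"
      by (intro range_eqI[of _ _ "r * s"]) simp
  next
    fix x a assume "(x,a) \<in> range (\<lambda>r. (sY (of_real r) y1, r * p y1))"
    then obtain s where "x = sY (of_real s) y1" "a = s * p y1" by auto
    then show "a \<le> p x" using p_real p_nonneg by (simp add: mult_right_mono)
  qed
qed

lemma GG_D:
  assumes "G \<in> GG y1"
  shows "(x,a)\<in>G \<Longrightarrow> (x,b)\<in>G \<Longrightarrow> a = b"
    and "(x,a)\<in>G \<Longrightarrow> (y,b)\<in>G \<Longrightarrow> (x+y,a+b)\<in>G"
    and "(x,a)\<in>G \<Longrightarrow> (sY (of_real r) x, r*a)\<in>G"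
    and "(x,a)\<in>G \<Longrightarrow> a \<le> p x"
    and "(y1, p y1) \<in> G"
  using assms unfolding GG_def by blast+

lemma GG_zero: "G \<in> GG y1 \<Longrightarrow> (0,0) \<in> G"
  using GG_D(3)[of G y1 y1 "p y1" 0] GG_D(5)[of G y1] by simp

lemma chain_union:
  assumes C: "C \<in> chains (GG y1)" "C \<noteq> {}"
  shows "\<Union>C \<in> GG y1"
proof -
  have sub: "C \<subseteq> GG y1" using C chainsD2 by blast
  have two: "\<exists>G\<in>C. X \<subseteq> G \<and> Z \<subseteq> G" if "X \<in> C" "Z \<in> C" for X Z
    using chainsD[OF C(1) that] that by blast
  show ?thesis unfolding GG_def
  proof (intro CollectI conjI allI impI)
    fix x a b assume "(x,a) \<in> \<Union>C" "(x,b) \<in> \<Union>C"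
    then obtain X Z where "X\<in>C" "Z\<in>C" "(x,a)\<in>X" "(x,b)\<in>Z" by auto
    with two obtain G where "G\<in>C" "(x,a)\<in>G" "(x,b)\<in>G" by blast
    then show "a = b" using GG_D(1) sub by blast
  next
    fix x a y b assume "(x,a) \<in> \<Union>C" "(y,b) \<in> \<Union>C"
    then obtain X Z where "X\<in>C" "Z\<in>C" "(x,a)\<in>X" "(y,b)\<in>Z" by auto
    with two obtain G where "G\<in>C" "(x,a)\<in>G" "(y,b)\<in>G" by blast
    then show "(x+y,a+b) \<in> \<Union>C" using GG_D(2)[of G] sub by blast
  next
    fix x a r assume "(x,a) \<in> \<Union>C"
    then show "(sY (of_real r) x, r*a) \<in> \<Union>C" using GG_D(3)[of _ y1] sub by blast
  next
    fix x a assume "(x,a) \<in> \<Union>C"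
    then show "a \<le> p x" using GG_D(4)[of _ y1] sub by blast
  next
    show "(y1, p y1) \<in> \<Union>C" using C(2) GG_D(5) sub by blast
  qed
qed

lemma extend:
  assumes M: "M \<in> GG y1" and x0: "\<And>a. (x0,a) \<notin> M"
  shows "\<exists>M'\<in>GG y1. M \<subseteq> M' \<and> M' \<noteq> M"
proof -
  define A where "A = {a - p (z - x0) | z a. (z,a) \<in> M}"
  define c where "c = Sup A"
  have key: "a - p (z - x0) \<le> p (w + x0) - b" if "(z,a)\<in>M" "(w,b)\<in>M" for z a w b
  proof -
    have "a + b \<le> p (z + w)" using GG_D(2,4)[OF M] that by blast
    also have "z + w = (z - x0) + (w + x0)" by (simp add: algebra_simps)
    finally show ?thesis using p_tri[of "z - x0" "w + x0"] by linarith
  qed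
  have Ane: "A \<noteq> {}" using GG_zero[OF M] unfolding A_def by blast
  have Abdd: "\<And>a. a \<in> A \<Longrightarrow> a \<le> p (0 + x0) - 0" using key GG_zero[OF M] unfolding A_def by blast
  have c_ge: "a - p (z - x0) \<le> c" if "(z,a)\<in>M" for z a
    unfolding c_def by (rule cSup_upper) (use that Abdd in \<open>auto simp: A_def bdd_above_def\<close>)
  have c_le: "c \<le> p (w + x0) - b" if "(w,b)\<in>M" for w b
    unfolding c_def by (rule cSup_least[OF Ane]) (use key that in \<open>auto simp: A_def\<close>)
  define M' where "M' = {(y + sY (of_real t) x0, b + t * c) | y b t. (y,b) \<in> M}"
  have inM': "(y + sY (of_real t) x0, b + t * c) \<in> M'" if "(y,b)\<in>M" for y b t
    using that unfolding M'_def by blast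
  have "M' \<in> GG y1" unfolding GG_def
  proof (intro CollectI conjI allI impI)
    fix x a b assume "(x,a) \<in> M'" "(x,b) \<in> M'"
    then obtain y1' b1 t1 y2 b2 t2 where e: "x = y1' + sY (of_real t1) x0" "a = b1 + t1 * c" "(y1',b1)\<in>M"
      "x = y2 + sY (of_real t2) x0" "b = b2 + t2 * c" "(y2,b2)\<in>M" unfolding M'_def by blast
    have t: "t1 = t2"
    proof (rule ccontr)
      assume ne: "t1 \<noteq> t2"
      have d: "(y1' + sY (of_real (-1)) y2, b1 + (-1) * b2) \<in> M"
        using GG_D(2)[OF M e(3) GG_D(3)[OF M e(6), of "-1"]] by simp
      have "y1' - y2 = sY (of_real (t2 - t1)) x0" using e(1,4)
        by (simp add: scale_left_diff_distrib algebra_simps)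
      then have "sY (of_real (1/(t2 - t1))) (y1' - y2) = x0" using ne by simp
      moreover have "(sY (of_real (1/(t2 - t1))) (y1' - y2), (1/(t2-t1)) * (b1 + (-1) * b2)) \<in> M"
        using GG_D(3)[OF M d, of "1/(t2-t1)"] by simp
      ultimately show False using x0 by metis
    qed
    then have "y1' = y2" using e by simp
    then have "b1 = b2" using GG_D(1)[OF M e(3)] e(6) by blast
    then show "a = b" using e t \<open>y1' = y2\<close> by simp
  next
    fix x a y b assume "(x,a) \<in> M'" "(y,b) \<in> M'"
    then obtain y1' b1 t1 y2 b2 t2 where e: "x = y1' + sY (of_real t1) x0" "a = b1 + t1 * c" "(y1',b1)\<in>M"
      "y = y2 + sY (of_real t2) x0" "b = b2 + t2 * c" "(y2,b2)\<in>M" unfolding M'_def by blast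
    have "(y1' + y2 + sY (of_real (t1+t2)) x0, b1 + b2 + (t1+t2) * c) \<in> M'"
      by (rule inM') (rule GG_D(2)[OF M e(3,6)])
    then show "(x+y, a+b) \<in> M'" using e by (simp add: scale_left_distrib algebra_simps)
  next
    fix x a r assume "(x,a) \<in> M'"
    then obtain y1' b1 t1 where e: "x = y1' + sY (of_real t1) x0" "a = b1 + t1 * c" "(y1',b1)\<in>M"
      unfolding M'_def by blast
    have "(sY (of_real r) y1' + sY (of_real (r*t1)) x0, r * b1 + (r*t1) * c) \<in> M'"
      by (rule inM') (rule GG_D(3)[OF M e(3)])
    then show "(sY (of_real r) x, r*a) \<in> M'" using e by (simp add: scale_right_distrib algebra_simps)
  next
    fix x a assume "(x,a) \<in> M'"
    then obtain y b t where e: "x = y + sY (of_real t) x0" "a = b + t * c" "(y,b)\<in>M"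
      unfolding M'_def by blast
    show "a \<le> p x"
    proof (cases t "0::real" rule: linorder_cases)
      case equal then show ?thesis using e GG_D(4)[OF M e(3)] by simp
    next
      case greater
      have m: "(sY (of_real (1/t)) y, (1/t) * b) \<in> M" using GG_D(3)[OF M e(3)] .
      have "c \<le> p (sY (of_real (1/t)) y + x0) - (1/t) * b" by (rule c_le[OF m])
      then have "t * c \<le> t * (p (sY (of_real (1/t)) y + x0) - (1/t) * b)"
        using greater by (intro mult_left_mono) auto
      also have "\<dots> = t * p (sY (of_real (1/t)) y + x0) - b"
        using greater by (simp add: right_diff_distrib)
      also have "t * p (sY (of_real (1/t)) y + x0) = p (sY (of_real t) (sY (of_real (1/t)) y + x0))"
        using greater by (simp add: p_real)
      also have "sY (of_real t) (sY (of_real (1/t)) y + x0) = x"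
        using greater e(1) by (simp add: scale_right_distrib)
      finally show ?thesis using e by simp
    next
      case less
      define s where "s = - t"
      have s: "s > 0" using less s_def by simp
      have m: "(sY (of_real (1/s)) y, (1/s) * b) \<in> M" using GG_D(3)[OF M e(3)] .
      have "(1/s) * b - p (sY (of_real (1/s)) y - x0) \<le> c" by (rule c_ge[OF m])
      then have "s * ((1/s) * b - p (sY (of_real (1/s)) y - x0)) \<le> s * c"
        using s by (intro mult_left_mono) auto
      then have "b - s * p (sY (of_real (1/s)) y - x0) \<le> s * c"
        using s by (simp add: right_diff_distrib)
      also have "s * p (sY (of_real (1/s)) y - x0) = p (sY (of_real s) (sY (of_real (1/s)) y - x0))"
        using s by (simp add: p_real)
      also have "sY (of_real s) (sY (of_real (1/s)) y - x0) = x"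
        using s e(1) by (simp add: scale_right_diff_distrib s_def)
      finally show ?thesis using e s_def by simp
    qed
  next
    show "(y1, p y1) \<in> M'" using inM'[OF GG_D(5)[OF M], of 0] by simp
  qed
  moreover have "M \<subseteq> M'" using inM'[of _ _ 0] by auto
  moreover have "M' \<noteq> M" using inM'[OF GG_zero[OF M], of 1] x0 by auto
  ultimately show ?thesis by blast
qed

lemma real_HB: "\<exists>\<psi>. (\<forall>x y. \<psi> (x + y) = \<psi> x + \<psi> y) \<and> (\<forall>r x. \<psi> (sY (of_real r) x) = r * \<psi> x)
   \<and> (\<forall>x. \<psi> x \<le> p x) \<and> \<psi> y1 = p y1"
proof -
  have "\<forall>C\<in>chains (GG y1). \<exists>U\<in>GG y1. \<forall>X\<in>C. X \<subseteq> U"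
  proof
    fix C assume C: "C \<in> chains (GG y1)"
    show "\<exists>U\<in>GG y1. \<forall>X\<in>C. X \<subseteq> U"
    proof (cases "C = {}")
      case True show ?thesis by (rule bexI[OF _ G0_in]) (simp add: True)
    next
      case False show ?thesis by (rule bexI[OF _ chain_union[OF C False]]) (intro ballI Union_upper)
    qed
  qed
  then have "\<exists>M\<in>GG y1. \<forall>X\<in>GG y1. M \<subseteq> X \<longrightarrow> X = M" by (rule Zorn_Lemma2)
  then obtain M where M: "M \<in> GG y1" and mx0: "\<forall>X\<in>GG y1. M \<subseteq> X \<longrightarrow> X = M"
    by (elim bexE) 
  have mx: "\<And>X. X \<in> GG y1 \<Longrightarrow> M \<subseteq> X \<Longrightarrow> X = M" using mx0 by simp
  have tot: "\<exists>a. (x,a) \<in> M" for x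
  proof (rule ccontr)
    assume "\<nexists>a. (x,a) \<in> M"
    then obtain M' where "M' \<in> GG y1" "M \<subseteq> M'" "M' \<noteq> M" using extend[OF M, of x] by blast
    then show False using mx by blast
  qed
  define \<psi> where "\<psi> x = (THE a. (x,a) \<in> M)" for x
  have psi: "(x, \<psi> x) \<in> M" for x
  proof -
    obtain a where a: "(x,a)\<in>M" using tot by blast
    have "\<psi> x = a" unfolding \<psi>_def
      by (rule the_equality[where P="\<lambda>a. (x,a) \<in> M", OF a]) (rule GG_D(1)[OF M _ a])
    then show ?thesis using a by simp
  qed
  have uniq: "(x,a) \<in> M \<Longrightarrow> \<psi> x = a" for x a by (rule GG_D(1)[OF M psi])
  show ?thesis
  proof (intro exI conjI allI)
    show "\<psi> (x + y) = \<psi> x + \<psi> y" for x y by (rule uniq, rule GG_D(2)[OF M psi psi])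
    show "\<psi> (sY (of_real r) x) = r * \<psi> x" for r x by (rule uniq, rule GG_D(3)[OF M psi])
    show "\<psi> x \<le> p x" for x by (rule GG_D(4)[OF M psi])
    show "\<psi> y1 = p y1" by (rule uniq, rule GG_D(5)[OF M])
  qed
qed


lemma complex_HB: "\<exists>\<phi>. Vector_Spaces.linear sY (*) \<phi> \<and> (\<forall>y. cmod (\<phi> y) \<le> p y) \<and> \<phi> y1 = of_real (p y1)"
proof -
  obtain \<psi> where add: "\<And>x y. \<psi> (x + y) = \<psi> x + \<psi> y" and sc: "\<And>r x. \<psi> (sY (of_real r) x) = r * \<psi> x"
    and le: "\<And>x. \<psi> x \<le> p x" and y1: "\<psi> y1 = p y1"
    using real_HB[of y1] by blast
  have psic: "\<psi> (sY c x) = Re c * \<psi> x + Im c * \<psi> (sY \<i> x)" for c x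
  proof -
    have "c = of_real (Re c) + of_real (Im c) * \<i>" by (simp add: complex_eq_iff)
    then have "sY c x = sY (of_real (Re c)) x + sY (of_real (Im c)) (sY \<i> x)"
      by (metis scale_left_distrib scale_scale)
    moreover have "sY (of_real (Im c) * \<i>) x = sY (of_real (Im c)) (sY \<i> x)" by simp
    ultimately show ?thesis by (simp add: add sc del: scale_scale)
  qed
  define \<phi> where "\<phi> x = complex_of_real (\<psi> x) - \<i> * complex_of_real (\<psi> (sY \<i> x))" for x
  have Re\<phi>: "Re (\<phi> x) = \<psi> x" for x by (simp add: \<phi>_def)
  have \<phi>add: "\<phi> (x + y) = \<phi> x + \<phi> y" for x y by (simp add: \<phi>_def add scale_right_distrib algebra_simps)
  have \<phi>sc: "\<phi> (sY c x) = c * \<phi> x" for c x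
  proof -
    have "\<psi> (sY \<i> (sY c x)) = - Im c * \<psi> x + Re c * \<psi> (sY \<i> x)"
      using psic[of "\<i> * c" x] by simp
    then show ?thesis using psic[of c x] by (simp add: \<phi>_def complex_eq_iff algebra_simps)
  qed
  have lin: "Vector_Spaces.linear sY (*) \<phi>"
    unfolding Vector_Spaces.linear_iff using vector_space_axioms vs_cmul \<phi>add \<phi>sc by blast
  have bound: "cmod (\<phi> x) \<le> p x" for x
  proof (cases "\<phi> x = 0")
    case True then show ?thesis using p_nonneg by simp
  next
    case False
    define \<alpha> where "\<alpha> = cnj (\<phi> x) / of_real (cmod (\<phi> x))"
    have n\<alpha>: "cmod \<alpha> = 1" using False by (simp add: \<alpha>_def norm_divide)
    have "\<phi> (sY \<alpha> x) = (\<phi> x * cnj (\<phi> x)) / of_real (cmod (\<phi> x))"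
      unfolding \<phi>sc \<alpha>_def by (simp add: mult.commute)
    also have "\<dots> = of_real ((cmod (\<phi> x))^2) / of_real (cmod (\<phi> x))"
      by (simp only: complex_norm_square)
    also have "\<dots> = of_real (cmod (\<phi> x))" using False by (simp add: power2_eq_square)
    finally have "\<phi> (sY \<alpha> x) = of_real (cmod (\<phi> x))" .
    then have "cmod (\<phi> x) = \<psi> (sY \<alpha> x)" using Re\<phi>[of "sY \<alpha> x"] by simp
    also have "\<dots> \<le> p (sY \<alpha> x)" by (rule le)
    also have "\<dots> = p x" using n\<alpha> by (simp add: p_scale)
    finally show ?thesis .
  qed
  have "\<phi> y1 = of_real (p y1)"
  proof -
    have r: "Re (\<phi> y1) = p y1" using Re\<phi> y1 by simp
    have "cmod (\<phi> y1) \<le> Re (\<phi> y1)" using bound r by simp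
    moreover have "\<bar>Re (\<phi> y1)\<bar> \<le> cmod (\<phi> y1)" by (rule abs_Re_le_cmod)
    ultimately have "Re (\<phi> y1) = cmod (\<phi> y1)" by linarith
    then have "(Im (\<phi> y1))^2 = 0" using cmod_power2[of "\<phi> y1"] by simp
    then have "Im (\<phi> y1) = 0" by simp
    then show ?thesis using r by (simp add: complex_eq_iff)
  qed
  then show ?thesis using lin bound by blast
qed

end



lemma obtain_nb: "\<exists>F e. A F \<and> B F \<and> C e \<and> D F e \<Longrightarrow> (\<And>F e. A F \<Longrightarrow> B F \<Longrightarrow> C e \<Longrightarrow> D F e \<Longrightarrow> thesis) \<Longrightarrow> thesis"
  by blast

lemma ex_nb: "A F \<Longrightarrow> B F \<Longrightarrow> C e \<Longrightarrow> D F e \<Longrightarrow> \<exists>F e. A F \<and> B F \<and> C e \<and> D F e"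
  by blast

lemma istop_lcs:
  fixes I :: "'i set" and P :: "'i \<Rightarrow> 'y::ab_group_add \<Rightarrow> real"
  shows "istopology (\<lambda>U. \<forall>y\<in>U. \<exists>F e. finite F \<and> F \<subseteq> I \<and> e > 0 \<and> {z. \<forall>i\<in>F. P i (z - y) < e} \<subseteq> U)"
  unfolding istopology_def
proof (intro conjI allI impI ballI)
  fix S T y
  assume S: "\<forall>y\<in>S. \<exists>F e. finite F \<and> F \<subseteq> I \<and> e > 0 \<and> {z. \<forall>i\<in>F. P i (z - y) < e} \<subseteq> S"
    and T: "\<forall>y\<in>T. \<exists>F e. finite F \<and> F \<subseteq> I \<and> e > 0 \<and> {z. \<forall>i\<in>F. P i (z - y) < e} \<subseteq> T"
    and y: "y \<in> S \<inter> T"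
  from y have yS: "y \<in> S" and yT: "y \<in> T" by auto
  obtain F1 e1 where 1: "finite F1" "F1 \<subseteq> I" "e1 > 0" "{z. \<forall>i\<in>F1. P i (z - y) < e1} \<subseteq> S"
    by (rule obtain_nb[OF bspec[OF S yS]])
  obtain F2 e2 where 2: "finite F2" "F2 \<subseteq> I" "e2 > 0" "{z. \<forall>i\<in>F2. P i (z - y) < e2} \<subseteq> T"
    by (rule obtain_nb[OF bspec[OF T yT]])
  have s1: "{z. \<forall>i\<in>F1 \<union> F2. P i (z - y) < min e1 e2} \<subseteq> {z. \<forall>i\<in>F1. P i (z - y) < e1}" by auto
  have s2: "{z. \<forall>i\<in>F1 \<union> F2. P i (z - y) < min e1 e2} \<subseteq> {z. \<forall>i\<in>F2. P i (z - y) < e2}" by auto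
  show "\<exists>F e. finite F \<and> F \<subseteq> I \<and> e > 0 \<and> {z. \<forall>i\<in>F. P i (z - y) < e} \<subseteq> S \<inter> T"
  proof (rule ex_nb)
    show "finite (F1 \<union> F2)" using 1 2 by simp
    show "F1 \<union> F2 \<subseteq> I" using 1 2 by simp
    show "min e1 e2 > 0" using 1 2 by simp
    show "{z. \<forall>i\<in>F1 \<union> F2. P i (z - y) < min e1 e2} \<subseteq> S \<inter> T"
      by (intro Int_greatest subset_trans[OF s1 1(4)] subset_trans[OF s2 2(4)])
  qed
next
  fix \<K> :: "'y set set" and y
  assume A: "\<forall>K\<in>\<K>. \<forall>y\<in>K. \<exists>F e. finite F \<and> F \<subseteq> I \<and> e > 0 \<and> {z. \<forall>i\<in>F. P i (z - y) < e} \<subseteq> K"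
    and y: "y \<in> \<Union>\<K>"
  from y obtain K0 where K0: "K0 \<in> \<K>" "y \<in> K0" by (rule UnionE)
  obtain F e where F: "finite F" "F \<subseteq> I" "e > 0" "{z. \<forall>i\<in>F. P i (z - y) < e} \<subseteq> K0"
    by (rule obtain_nb[OF bspec[OF bspec[OF A K0(1)] K0(2)]])
  have "K0 \<subseteq> \<Union>\<K>" using K0(1) by (rule Union_upper)
  then have sub: "{z. \<forall>i\<in>F. P i (z - y) < e} \<subseteq> \<Union>\<K>" using F(4) by (rule subset_trans[rotated])
  show "\<exists>F e. finite F \<and> F \<subseteq> I \<and> e > 0 \<and> {z. \<forall>i\<in>F. P i (z - y) < e} \<subseteq> \<Union>\<K>"
  proof (rule ex_nb)
    show "finite F" "F \<subseteq> I" "e > 0" using F by auto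
    show "{z. \<forall>i\<in>F. P i (z - y) < e} \<subseteq> \<Union>\<K>" by (rule sub)
  qed
qed

lemma openin_lcs: "openin (lcs_topology I P) U \<longleftrightarrow>
   (\<forall>y\<in>U. \<exists>F e. finite F \<and> F \<subseteq> I \<and> e > 0 \<and> {z. \<forall>i\<in>F. P i (z - y) < e} \<subseteq> U)"
  by (simp only: lcs_topology_def topology_inverse'[OF istop_lcs])

lemma topspace_lcs: "topspace (lcs_topology I P) = UNIV"
proof -
  have "openin (lcs_topology I P) UNIV" unfolding openin_lcs
    by (intro ballI exI[of _ "{}"] exI[of _ "1::real"]) auto
  then have "UNIV \<subseteq> topspace (lcs_topology I P)" by (rule openin_subset)
  then show ?thesis by auto
qed

lemma cont_dom:
  assumes cp: "continuous_map (lcs_topology I P) euclideanreal p" and p0: "p 0 = 0"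
    and lin: "\<And>x y. \<phi> (x - y) = \<phi> x - (\<phi> y :: complex)" and b: "\<And>y. cmod (\<phi> y) \<le> p y"
  shows "continuous_map (lcs_topology I P) euclidean \<phi>"
  unfolding continuous_map_def
proof (intro conjI allI impI)
  show "\<phi> \<in> topspace (lcs_topology I P) \<rightarrow> topspace euclidean" by simp
next
  fix U :: "complex set" assume "openin euclidean U"
  then have U: "open U" by simp
  show "openin (lcs_topology I P) {x \<in> topspace (lcs_topology I P). \<phi> x \<in> U}"
    unfolding openin_lcs topspace_lcs
  proof
    fix y assume "y \<in> {x \<in> UNIV. \<phi> x \<in> U}"
    then have "\<phi> y \<in> U" by simp
    then obtain e where e: "e > 0" "ball (\<phi> y) e \<subseteq> U" using U open_contains_ball by blast
    have "\<forall>U. openin euclideanreal U \<longrightarrow> openin (lcs_topology I P) {x \<in> topspace (lcs_topology I P). p x \<in> U}"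
      using cp unfolding continuous_map_def by blast
    moreover have "openin euclideanreal {..<e}" by simp
    ultimately have "openin (lcs_topology I P) {x \<in> topspace (lcs_topology I P). p x \<in> {..<e}}"
      by blast
    then have "openin (lcs_topology I P) {x. p x < e}" by (simp add: topspace_lcs)
    moreover have "0 \<in> {x. p x < e}" using p0 e by simp
    ultimately have "\<exists>F e'. finite F \<and> F \<subseteq> I \<and> e' > 0 \<and> {z. \<forall>i\<in>F. P i (z - 0) < e'} \<subseteq> {x. p x < e}"
      unfolding openin_lcs by (rule bspec)
    then obtain F e' where F: "finite F" "F \<subseteq> I" "e' > 0" "{z. \<forall>i\<in>F. P i (z - 0) < e'} \<subseteq> {x. p x < e}"
      by (rule obtain_nb)
    have sub: "{z. \<forall>i\<in>F. P i (z - y) < e'} \<subseteq> {x \<in> UNIV. \<phi> x \<in> U}"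
    proof
      fix z assume "z \<in> {z. \<forall>i\<in>F. P i (z - y) < e'}"
      then have "p (z - y) < e" using F(4) by auto
      then have "cmod (\<phi> z - \<phi> y) < e" using b[of "z - y"] lin by simp
      then have "\<phi> z \<in> ball (\<phi> y) e" by (simp add: dist_norm norm_minus_commute)
      then show "z \<in> {x \<in> UNIV. \<phi> x \<in> U}" using e by auto
    qed
    show "\<exists>F e. finite F \<and> F \<subseteq> I \<and> e > 0 \<and> {z. \<forall>i\<in>F. P i (z - y) < e} \<subseteq> {x \<in> UNIV. \<phi> x \<in> U}"
    proof (rule ex_nb)
      show "finite F" "F \<subseteq> I" "e' > 0" using F by auto
      show "{z. \<forall>i\<in>F. P i (z - y) < e'} \<subseteq> {x \<in> UNIV. \<phi> x \<in> U}" by (rule sub)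
    qed
  qed
qed

lemma nowhere:
  assumes sn: "\<forall>i\<in>I. seminorm_on sY (P i)" and V: "V \<subseteq> H" "openin (lcs_topology I P) V"
    and H: "\<And>y \<epsilon>. y \<in> H \<Longrightarrow> \<epsilon> > 0 \<Longrightarrow> y + sY (of_real \<epsilon>) d \<notin> H"
  shows "V = {}"
proof (rule ccontr)
  assume "V \<noteq> {}"
  then obtain y where y: "y \<in> V" by blast
  then have "\<exists>F e. finite F \<and> F \<subseteq> I \<and> e > 0 \<and> {z. \<forall>i\<in>F. P i (z - y) < e} \<subseteq> V"
    using V(2) unfolding openin_lcs by blast
  then obtain F e where F: "finite F" "F \<subseteq> I" "e > 0" "{z. \<forall>i\<in>F. P i (z - y) < e} \<subseteq> V"
    by (rule obtain_nb)
  define Kc where "Kc = (\<Sum>i\<in>F. P i d)"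
  have nn: "0 \<le> P i d" if "i \<in> F" for i using sn F(2) that by (auto simp: seminorm_on_def)
  have Kc0: "Kc \<ge> 0" unfolding Kc_def using nn by (simp add: sum_nonneg)
  have le: "P i d \<le> Kc" if "i \<in> F" for i unfolding Kc_def
    using member_le_sum[of i F "\<lambda>i. P i d"] nn that F(1) by simp
  define \<epsilon> where "\<epsilon> = e / (Kc + 1)"
  have \<epsilon>: "\<epsilon> > 0" using F(3) Kc0 by (simp add: \<epsilon>_def)
  have "\<epsilon> * Kc < e"
  proof -
    have "\<epsilon> * Kc < \<epsilon> * (Kc + 1)" using \<epsilon> by simp
    also have "\<dots> = e" using Kc0 by (simp add: \<epsilon>_def)
    finally show ?thesis .
  qed
  have "y + sY (of_real \<epsilon>) d \<in> V"
  proof (rule subsetD[OF F(4)], intro CollectI ballI)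
    fix i assume i: "i \<in> F"
    have "P i (y + sY (of_real \<epsilon>) d - y) = P i (sY (of_real \<epsilon>) d)" by simp
    also have "\<dots> = \<epsilon> * P i d" using sn F(2) i \<epsilon> by (auto simp: seminorm_on_def)
    also have "\<dots> \<le> \<epsilon> * Kc" using le[OF i] \<epsilon> by simp
    finally show "P i (y + sY (of_real \<epsilon>) d - y) < e" using \<open>\<epsilon> * Kc < e\<close> by simp
  qed
  moreover have "y \<in> H" using V(1) y by (rule subsetD)
  ultimately show False using H[OF _ \<epsilon>, of y] V(1) by (meson subsetD)
qed




lemma seg_complex: "z \<in> closed_segment 0 (1::complex) \<longleftrightarrow> (\<exists>s\<in>{0..1}. z = of_real s)"
  unfolding closed_segment_def by (auto simp: scaleR_conv_of_real)

lemma seg_nbhd: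
  fixes L :: "complex set"
  assumes L: "open L" "closed_segment 0 1 \<subseteq> L"
  shows "\<exists>S. open S \<and> connected S \<and> closed_segment 0 1 \<subseteq> S \<and> S \<subseteq> L"
proof -
  obtain \<epsilon> where \<epsilon>: "0 < \<epsilon>" "\<And>x. x \<in> closed_segment 0 1 \<Longrightarrow> \<exists>G\<in>{L}. ball x \<epsilon> \<subseteq> G"
    using Heine_Borel_lemma[of "closed_segment (0::complex) 1" "{L}"] L by auto
  define S where "S = (\<Union>x\<in>closed_segment 0 1. \<Union>y\<in>ball (0::complex) \<epsilon>. {x + y})"
  have "open S" unfolding S_def by (rule open_sums) simp
  moreover have "convex S" unfolding S_def by (rule convex_sums) auto
  then have "connected S" by (rule convex_connected)
  moreover have "closed_segment 0 1 \<subseteq> S"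
  proof
    fix x assume "x \<in> closed_segment 0 (1::complex)"
    then show "x \<in> S" unfolding S_def using \<epsilon>(1) by (intro UN_I[of x] UN_I[of 0]) auto
  qed
  moreover have "S \<subseteq> L"
  proof
    fix z assume "z \<in> S"
    then obtain x y where xy: "x \<in> closed_segment 0 1" "y \<in> ball 0 \<epsilon>" "z = x + y" unfolding S_def by blast
    then have "z \<in> ball x \<epsilon>" by (simp add: dist_norm)
    then show "z \<in> L" using \<epsilon>(2)[OF xy(1)] by blast
  qed
  ultimately show ?thesis by blast
qed

locale mt = X: vector_space sX for sX :: "complex \<Rightarrow> 'x::ab_group_add \<Rightarrow> 'x" +
  fixes \<Omega> :: "'x set" and g :: "'x \<Rightarrow> complex" and K :: complex
  assumes \<Omega>open: "two_open sX \<Omega>"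
    and ghol: "\<And>a v. a \<in> \<Omega> \<Longrightarrow> \<exists>r>0. (\<forall>z\<in>ball 0 r. a + sX z v \<in> \<Omega>) \<and> (\<lambda>z. g (a + sX z v)) holomorphic_on ball 0 r"
begin

lemma one_open_\<Omega>: "v \<noteq> 0 \<Longrightarrow> open {z. a + sX z v \<in> \<Omega>}"
  using \<Omega>open by (simp add: two_open_def one_open_def)

lemma line_hol: "(\<lambda>z. g (a + sX z v)) holomorphic_on {z. a + sX z v \<in> \<Omega>}"
  unfolding holomorphic_on_def
proof
  fix z0 assume "z0 \<in> {z. a + sX z v \<in> \<Omega>}"
  then obtain r where r: "r > 0" and h: "(\<lambda>z. g (a + sX z0 v + sX z v)) holomorphic_on ball 0 r"
    using ghol[of "a + sX z0 v" v] by auto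
  have eq: "(\<lambda>z. g (a + sX z v)) = (\<lambda>z. g (a + sX z0 v + sX z v)) \<circ> (\<lambda>z. z - z0)"
    by (auto simp: fun_eq_iff X.scale_left_diff_distrib algebra_simps)
  have hz: "(\<lambda>z. z - z0) holomorphic_on ball z0 r" by (intro holomorphic_intros)
  have img: "(\<lambda>z. z - z0) ` ball z0 r \<subseteq> ball 0 r" by (auto simp: dist_norm norm_minus_commute)
  have "((\<lambda>z. g (a + sX z0 v + sX z v)) \<circ> (\<lambda>z. z - z0)) holomorphic_on ball z0 r"
    by (rule holomorphic_on_compose[OF hz holomorphic_on_subset[OF h img]])
  then have "(\<lambda>z. g (a + sX z v)) holomorphic_on ball z0 r" using eq by simp
  then have "(\<lambda>z. g (a + sX z v)) field_differentiable at z0"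
    using holomorphic_on_imp_differentiable_at[of _ "ball z0 r" z0] r by simp
  then show "(\<lambda>z. g (a + sX z v)) field_differentiable at z0 within {z. a + sX z v \<in> \<Omega>}"
    by (rule field_differentiable_at_within)
qed

definition good where "good x \<longleftrightarrow> (\<forall>w. \<exists>r>0. \<forall>t\<in>ball 0 r. g (x + sX t w) = K)"

lemma good_val: "good x \<Longrightarrow> g x = K"
  unfolding good_def by (metis X.scale_zero_left add.right_neutral centre_in_ball)

lemma propagate:
  assumes S: "open S" "connected S" "S \<subseteq> {z. a + sX z v \<in> \<Omega>}" "0 \<in> S"
    and r: "r > 0" "\<forall>t\<in>ball 0 r. g (a + sX t v) = K" and z: "z \<in> S"
  shows "g (a + sX z v) = K"
proof -
  have h: "(\<lambda>z. g (a + sX z v)) holomorphic_on S" using line_hol S(3) by (rule holomorphic_on_subset)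
  have "(\<lambda>z. g (a + sX z v)) z = (\<lambda>z. K) z"
    by (rule analytic_continuation_open[of "S \<inter> ball 0 r" S]) (use S r z h in auto)
  then show ?thesis by simp
qed

lemma delta:
  assumes u: "u \<noteq> 0" and seg: "\<forall>s\<in>{0..1}. x + sX (of_real s) u \<in> \<Omega>"
  shows "\<exists>\<delta>>0. \<forall>t. cmod t < \<delta> \<longrightarrow> (\<forall>s\<in>{0..1}. x + sX (of_real s) (u + sX t w) \<in> \<Omega>)"
proof (cases "u \<noteq> w \<and> \<not> X.dependent {u, w}")
  case True
  define W where "W = {q::complex\<times>complex. x + sX (fst q) u + sX (snd q) w \<in> \<Omega>}"
  have "open W" using \<Omega>open True unfolding two_open_def W_def by blast
  define Kc where "Kc = (\<lambda>s::real. (complex_of_real s, 0::complex)) ` {0..1}"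
  have "compact Kc" unfolding Kc_def by (intro compact_continuous_image continuous_intros) auto
  have "Kc \<subseteq> W" unfolding Kc_def W_def using seg by auto
  obtain \<epsilon> where \<epsilon>: "\<epsilon> > 0" "\<And>q. q \<in> Kc \<Longrightarrow> \<exists>G\<in>{W}. ball q \<epsilon> \<subseteq> G"
    using Heine_Borel_lemma[of Kc "{W}"] \<open>compact Kc\<close> \<open>Kc \<subseteq> W\<close> \<open>open W\<close> by auto
  show ?thesis
  proof (intro exI[of _ \<epsilon>] conjI allI impI ballI)
    show "\<epsilon> > 0" by (rule \<epsilon>(1))
    fix t s assume t: "cmod t < \<epsilon>" and s: "s \<in> {0..1::real}"
    have "(complex_of_real s, 0::complex) \<in> Kc" using s by (auto simp: Kc_def)
    then have B: "ball (complex_of_real s, 0::complex) \<epsilon> \<subseteq> W" using \<epsilon>(2) by blast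
    have "dist (complex_of_real s, 0::complex) (of_real s, of_real s * t) = cmod (of_real s * t)"
      by (simp add: dist_Pair_Pair dist_norm)
    also have "\<dots> = s * cmod t" using s by (simp add: norm_mult)
    also have "\<dots> \<le> cmod t" using s by (intro mult_left_le_one_le) auto
    finally have "(of_real s, of_real s * t) \<in> W" using B t by auto
    then show "x + sX (of_real s) (u + sX t w) \<in> \<Omega>" unfolding W_def
      by (simp add: X.scale_right_distrib add.assoc)
  qed
next
  case False
  obtain \<beta> where \<beta>: "w = sX \<beta> u"
  proof -
    consider "u = w" | "X.dependent {u, w}" using False by blast
    then show ?thesis
    proof cases
      case 1 then show ?thesis using that[of 1] by simp
    next
      case 2
      show ?thesis
      proof (cases "w = 0")
        case True then show ?thesis using that[of 0] by simp
      next
        case False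
        have "w \<in> X.span {u}"
        proof (rule ccontr)
          assume "w \<notin> X.span {u}"
          then have "X.dependent {u}" using X.dependent_insertD[of w "{u}"] 2 by (simp add: insert_commute)
          then show False using u by simp
        qed
        then obtain k where "w = sX k u" by (auto simp: X.span_singleton)
        then show ?thesis by (rule that)
      qed
    qed
  qed
  define L0 where "L0 = {z. x + sX z u \<in> \<Omega>}"
  have "open L0" unfolding L0_def using one_open_\<Omega>[OF u] .
  have segL: "closed_segment 0 1 \<subseteq> L0" using seg by (auto simp: L0_def seg_complex)
  obtain \<epsilon> where \<epsilon>: "\<epsilon> > 0" "\<And>q. q \<in> closed_segment 0 1 \<Longrightarrow> \<exists>G\<in>{L0}. ball q \<epsilon> \<subseteq> G"
    using Heine_Borel_lemma[of "closed_segment (0::complex) 1" "{L0}"] \<open>open L0\<close> segL by auto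
  define \<delta> where "\<delta> = \<epsilon> / (cmod \<beta> + 1)"
  have pos: "cmod \<beta> + 1 > 0" by (simp add: add_nonneg_pos)
  show ?thesis
  proof (intro exI[of _ \<delta>] conjI allI impI ballI)
    show "\<delta> > 0" using \<epsilon> pos by (simp add: \<delta>_def)
    fix t s assume t: "cmod t < \<delta>" and s: "s \<in> {0..1::real}"
    have "of_real s \<in> closed_segment 0 (1::complex)" using s by (auto simp: seg_complex)
    then have B: "ball (complex_of_real s) \<epsilon> \<subseteq> L0" using \<epsilon>(2) by blast
    have "cmod t * cmod \<beta> \<le> cmod t * (cmod \<beta> + 1)" by (simp add: mult_left_mono)
    also have "\<dots> < \<delta> * (cmod \<beta> + 1)" using t pos by (intro mult_strict_right_mono) auto
    also have "\<dots> = \<epsilon>" using pos by (simp add: \<delta>_def)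
    finally have tb: "cmod t * cmod \<beta> < \<epsilon>" .
    have "dist (complex_of_real s) (of_real s * (1 + t * \<beta>)) = cmod (of_real s * (t * \<beta>))"
      by (simp add: dist_norm algebra_simps norm_minus_commute)
    also have "\<dots> = s * (cmod t * cmod \<beta>)" using s by (simp add: norm_mult)
    also have "\<dots> \<le> cmod t * cmod \<beta>" using s by (intro mult_left_le_one_le) auto
    finally have "of_real s * (1 + t * \<beta>) \<in> L0" using B tb by auto
    moreover have "sX (of_real s) (u + sX t w) = sX (of_real s * (1 + t * \<beta>)) u"
      unfolding \<beta> by (simp add: X.scale_right_distrib X.scale_left_distrib algebra_simps)
    ultimately show "x + sX (of_real s) (u + sX t w) \<in> \<Omega>" unfolding L0_def by simp
  qed
qed

lemma step:
  assumes gx: "good x" and seg: "\<forall>s\<in>{0..1}. x + sX (of_real s) u \<in> \<Omega>"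
  shows "good (x + u)"
proof (cases "u = 0")
  case True then show ?thesis using gx by simp
next
  case u: False
  show ?thesis unfolding good_def
  proof
    fix w
    obtain \<delta> where \<delta>: "\<delta> > 0" "\<And>t. cmod t < \<delta> \<Longrightarrow> \<forall>s\<in>{0..1}. x + sX (of_real s) (u + sX t w) \<in> \<Omega>"
      using delta[OF u seg, of w] by blast
    have "\<forall>t\<in>ball 0 \<delta>. g (x + u + sX t w) = K"
    proof
      fix t :: complex assume "t \<in> ball 0 \<delta>"
      then have t: "cmod t < \<delta>" by simp
      define v where "v = u + sX t w"
      have eqv: "x + u + sX t w = x + sX 1 v" by (simp add: v_def add.assoc)
      show "g (x + u + sX t w) = K"
      proof (cases "v = 0")
        case True
        then show ?thesis using good_val[OF gx] by (simp add: v_def add.assoc)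
      next
        case False
        define L where "L = {z. x + sX z v \<in> \<Omega>}"
        have "open L" using one_open_\<Omega>[OF False] unfolding L_def .
        have "closed_segment 0 1 \<subseteq> L" using \<delta>(2)[OF t] unfolding L_def v_def by (auto simp: seg_complex)
        then obtain S where S: "open S" "connected S" "closed_segment 0 1 \<subseteq> S" "S \<subseteq> L"
          using seg_nbhd \<open>open L\<close> by blast
        obtain r where r: "r > 0" "\<forall>t\<in>ball 0 r. g (x + sX t v) = K" using gx unfolding good_def by blast
        have "g (x + sX 1 v) = K"
          by (rule propagate[OF S(1,2) _ _ r]) (use S in \<open>auto simp: L_def\<close>)
        then show ?thesis by (simp add: v_def add.assoc)
      qed
    qed
    then show "\<exists>r>0. \<forall>t\<in>ball 0 r. g (x + u + sX t w) = K" using \<delta>(1) by blast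
  qed
qed

lemma init:
  assumes c: "c \<in> \<Omega>" and U: "one_open sX U" "c \<in> U"
    and bd: "\<And>x. x \<in> U \<inter> \<Omega> \<Longrightarrow> cmod (g x) \<le> cmod K" and gc: "g c = K"
  shows "good c"
  unfolding good_def
proof
  fix w
  show "\<exists>r>0. \<forall>t\<in>ball 0 r. g (c + sX t w) = K"
  proof (cases "w = 0")
    case True then show ?thesis using gc by (auto intro!: exI[of _ 1])
  next
    case False
    have o: "open ({z. c + sX z w \<in> \<Omega>} \<inter> {z. c + sX z w \<in> U})"
      using one_open_\<Omega>[OF False] U(1) False unfolding one_open_def by blast
    have "0 \<in> {z. c + sX z w \<in> \<Omega>} \<inter> {z. c + sX z w \<in> U}" using c U(2) by simp
    then obtain r where r: "r > 0" "ball 0 r \<subseteq> {z. c + sX z w \<in> \<Omega>} \<inter> {z. c + sX z w \<in> U}"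
      using o open_contains_ball by blast
    have h: "(\<lambda>z. g (c + sX z w)) holomorphic_on ball 0 r"
      using holomorphic_on_subset[OF line_hol] r(2) by blast
    have "(\<lambda>z. g (c + sX z w)) constant_on ball 0 r"
    proof (rule maximum_modulus_principle[OF h open_ball connected_ball open_ball subset_refl])
      show "0 \<in> ball (0::complex) r" using r by simp
      fix z assume "z \<in> ball (0::complex) r"
      then have "c + sX z w \<in> U \<inter> \<Omega>" using r(2) by blast
      then show "cmod (g (c + sX z w)) \<le> cmod (g (c + sX 0 w))" using bd gc by simp
    qed
    then obtain y where y: "\<forall>z\<in>ball 0 r. g (c + sX z w) = y" unfolding constant_on_def by blast
    have "y = K" using y[rule_format, of 0] r gc by simp
    then show ?thesis using y r by blast
  qed
qed

lemma all_good:
  assumes c: "c \<in> \<Omega>" "good c" and pc: "polygonally_connected sX \<Omega>" and x: "x \<in> \<Omega>"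
  shows "g x = K"
proof -
  obtain xs where xs: "xs \<noteq> []" "hd xs = c" "last xs = x"
    "\<forall>k < length xs - 1. \<forall>t::real. 0 \<le> t \<and> t \<le> 1 \<longrightarrow> xs ! k + sX (complex_of_real t) (xs ! Suc k - xs ! k) \<in> \<Omega>"
    using pc c x unfolding polygonally_connected_def by blast
  have "k < length xs \<Longrightarrow> good (xs ! k)" for k
  proof (induction k)
    case 0 then show ?case using xs c by (simp add: hd_conv_nth[symmetric])
  next
    case (Suc k)
    then have gk: "good (xs ! k)" by simp
    have "\<forall>s\<in>{0..1}. xs ! k + sX (of_real s) (xs ! Suc k - xs ! k) \<in> \<Omega>" using xs(4) Suc.prems by auto
    from step[OF gk this] show ?case by simp
  qed
  then have "good (last xs)" using xs(1) by (simp add: last_conv_nth)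
  then show ?thesis using xs(3) good_val by simp
qed

end



theorem mainTheorem6:
  fixes sX :: "complex \<Rightarrow> 'x::ab_group_add \<Rightarrow> 'x"
    and sY :: "complex \<Rightarrow> 'y::ab_group_add \<Rightarrow> 'y"
    and I :: "'i set" and P :: "'i \<Rightarrow> 'y \<Rightarrow> real"
    and \<Omega> :: "'x set" and f :: "'x \<Rightarrow> 'y" and p :: "'y \<Rightarrow> real" and c :: 'x
  assumes X: "Vector_Spaces.vector_space sX"
    and dimX: "\<exists>u v. u \<noteq> v \<and> \<not> module.dependent sX {u, v}"
    and Y: "lcs sY I P"
    and Y_Hausdorff: "Hausdorff_space (lcs_topology I P)"
    and Y_complete: "seq_complete_lcs I P"
    and Y_nontriv: "\<exists>y::'y. y \<noteq> 0"
    and \<Omega>_open: "two_open sX \<Omega>"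
    and \<Omega>_conn: "polygonally_connected sX \<Omega>"
    and f_hol: "gateaux_holomorphic sX sY I P \<Omega> f"
    and p_seminorm: "seminorm_on sY p"
    and p_cont: "continuous_map (lcs_topology I P) euclideanreal p"
    and p_nonzero: "\<exists>y. p y \<noteq> 0"
    and c_in: "c \<in> \<Omega>"
    and c_locmax: "\<exists>U. one_open sX U \<and> c \<in> U \<and> (\<forall>x\<in>U \<inter> \<Omega>. p (f x) \<le> p (f c))"
  shows "(\<forall>x\<in>\<Omega>. p (f c) \<le> p (f x))
       \<and> (lcs_topology I P) interior_of ((lcs_topology I P) closure_of (f ` \<Omega>)) = {}
       \<and> (p (f c) > 0 \<longrightarrow> 0 \<notin> f ` \<Omega>)"
proof -
  have VY: "Vector_Spaces.vector_space sY" and snI: "\<forall>i\<in>I. seminorm_on sY (P i)"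
    using Y by (auto simp: lcs_def)
  interpret Yv: vector_space sY by (rule VY)
  have hbi: "hb sY p" using VY p_seminorm by (simp add: hb_def hb_axioms_def)
  have p_nn: "\<And>y. 0 \<le> p y" and p_sc: "\<And>c y. p (sY c y) = cmod c * p y"
    and p_tr: "\<And>y z. p (y + z) \<le> p y + p z"
    using p_seminorm by (auto simp: seminorm_on_def)
  have p0: "p 0 = 0" using hb.p_zero[OF hbi] .
  obtain U where U: "one_open sX U" "c \<in> U" "\<forall>x\<in>U \<inter> \<Omega>. p (f x) \<le> p (f c)"
    using c_locmax by blast
  define M where "M = p (f c)"
  have lin_props: "\<phi> (x + y) = \<phi> x + \<phi> y" "\<phi> (sY a x) = a * \<phi> x" "\<phi> (x - y) = \<phi> x - \<phi> y"
    if lin: "Vector_Spaces.linear sY (*) \<phi>" for \<phi> x y a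
  proof -
    have add: "\<And>x y. \<phi> (x + y) = \<phi> x + \<phi> y" and sc: "\<And>a x. \<phi> (sY a x) = a * \<phi> x"
      using lin unfolding Vector_Spaces.linear_iff by auto
    show "\<phi> (x + y) = \<phi> x + \<phi> y" "\<phi> (sY a x) = a * \<phi> x" by (rule add, rule sc)
    show "\<phi> (x - y) = \<phi> x - \<phi> y" using add[of "x - y" y] by simp
  qed
  have contphi: "continuous_map (lcs_topology I P) euclidean \<phi>"
    if lin: "Vector_Spaces.linear sY (*) \<phi>" and bd: "\<forall>y. cmod (\<phi> y) \<le> p y" for \<phi>
    by (rule cont_dom[OF p_cont p0]) (use lin_props(3)[OF lin] bd in auto)
  have key: "\<forall>x\<in>\<Omega>. \<phi> (f x) = \<phi> (f c)"
    if lin: "Vector_Spaces.linear sY (*) \<phi>" and bd: "\<forall>y. cmod (\<phi> y) \<le> p y"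
      and eq: "cmod (\<phi> (f c)) = M" for \<phi>
  proof -
    have dual: "\<phi> \<in> dual_space sY I P" using lin contphi[OF lin bd] by (simp add: dual_space_def)
    have mti: "mt sX \<Omega> (\<lambda>x. \<phi> (f x))"
      unfolding mt_def mt_axioms_def
    proof (intro conjI X \<Omega>_open allI impI)
      fix a v assume "a \<in> \<Omega>"
      have "\<forall>a\<in>\<Omega>. \<forall>v. \<forall>\<phi>\<in>dual_space sY I P. \<exists>r>0. (\<forall>z\<in>ball 0 r. a + sX z v \<in> \<Omega>) \<and>
        (\<lambda>z. \<phi> (f (a + sX z v))) holomorphic_on ball 0 r" using f_hol unfolding gateaux_holomorphic_def .
      then have "\<forall>v. \<forall>\<phi>\<in>dual_space sY I P. \<exists>r>0. (\<forall>z\<in>ball 0 r. a + sX z v \<in> \<Omega>) \<and>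
        (\<lambda>z. \<phi> (f (a + sX z v))) holomorphic_on ball 0 r" using \<open>a \<in> \<Omega>\<close> by (rule bspec)
      then have "\<forall>\<phi>\<in>dual_space sY I P. \<exists>r>0. (\<forall>z\<in>ball 0 r. a + sX z v \<in> \<Omega>) \<and>
        (\<lambda>z. \<phi> (f (a + sX z v))) holomorphic_on ball 0 r" by (rule spec)
      then show "\<exists>r>0. (\<forall>z\<in>ball 0 r. a + sX z v \<in> \<Omega>) \<and> (\<lambda>z. \<phi> (f (a + sX z v))) holomorphic_on ball 0 r"
        using dual by (rule bspec)
    qed
    have bdU: "cmod (\<phi> (f x)) \<le> cmod (\<phi> (f c))" if "x \<in> U \<inter> \<Omega>" for x
    proof -
      have "cmod (\<phi> (f x)) \<le> p (f x)" using bd by blast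
      also have "\<dots> \<le> p (f c)" using U(3) that by blast
      finally show ?thesis using eq M_def by simp
    qed
    have "mt.good sX (\<lambda>x. \<phi> (f x)) (\<phi> (f c)) c"
      by (rule mt.init[OF mti c_in U(1,2) bdU refl])
    then show ?thesis using mt.all_good[OF mti c_in _ \<Omega>_conn] by blast
  qed
  have Mnn: "M \<ge> 0" using p_nn M_def by simp
  show ?thesis
  proof (cases "M > 0")
    case True
    obtain \<phi> where lin: "Vector_Spaces.linear sY (*) \<phi>" and bd: "\<forall>y. cmod (\<phi> y) \<le> p y"
      and \<phi>c: "\<phi> (f c) = of_real M"
      using hb.complex_HB[OF hbi, of "f c"] M_def by blast
    have k: "\<forall>x\<in>\<Omega>. \<phi> (f x) = of_real M" using key[OF lin bd] \<phi>c True by simp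
    have c1: "\<forall>x\<in>\<Omega>. p (f c) \<le> p (f x)"
    proof
      fix x assume "x \<in> \<Omega>"
      then have "M = cmod (\<phi> (f x))" using k True by simp
      also have "\<dots> \<le> p (f x)" using bd by blast
      finally show "p (f c) \<le> p (f x)" using M_def by simp
    qed
    have c3: "0 \<notin> f ` \<Omega>"
    proof
      assume "0 \<in> f ` \<Omega>"
      then obtain x where x: "x \<in> \<Omega>" "f x = 0" by auto
      then have "p (f c) \<le> p (f x)" using c1 by blast
      then show False using x(2) p0 True M_def by simp
    qed
    define H where "H = {y. \<phi> y = of_real M}"
    have "closedin (lcs_topology I P) {x \<in> topspace (lcs_topology I P). \<phi> x \<in> {of_real M}}"
      by (rule closedin_continuous_map_preimage[OF contphi[OF lin bd]]) simp
    then have clH: "closedin (lcs_topology I P) H" by (simp add: topspace_lcs H_def)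
    have "f ` \<Omega> \<subseteq> H" using k by (auto simp: H_def)
    then have cl: "(lcs_topology I P) closure_of (f ` \<Omega>) \<subseteq> H" using clH by (rule closure_of_minimal)
    have c2: "(lcs_topology I P) interior_of ((lcs_topology I P) closure_of (f ` \<Omega>)) = {}"
    proof (rule nowhere[OF snI _ openin_interior_of, of _ H "f c"])
      show "(lcs_topology I P) interior_of ((lcs_topology I P) closure_of (f ` \<Omega>)) \<subseteq> H"
        by (rule subset_trans[OF interior_of_subset cl])
      fix y \<epsilon> assume y: "y \<in> H" and \<epsilon>: "(\<epsilon>::real) > 0"
      have "\<phi> (y + sY (of_real \<epsilon>) (f c)) = of_real M + of_real \<epsilon> * of_real M"
        using y \<phi>c by (simp add: lin_props(1,2)[OF lin] H_def)
      also have "\<dots> \<noteq> of_real M" using \<epsilon> True by simp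
      finally show "y + sY (of_real \<epsilon>) (f c) \<notin> H" by (simp add: H_def)
    qed
    show ?thesis by (intro conjI c1 c2 impI c3)
  next
    case False
    then have M0: "M = 0" using Mnn by simp
    have allz: "p (f x) = 0" if x: "x \<in> \<Omega>" for x
    proof (rule ccontr)
      assume ne: "p (f x) \<noteq> 0"
      obtain \<phi> where lin: "Vector_Spaces.linear sY (*) \<phi>" and bd: "\<forall>y. cmod (\<phi> y) \<le> p y"
        and \<phi>x: "\<phi> (f x) = of_real (p (f x))"
        using hb.complex_HB[OF hbi, of "f x"] by blast
      have "cmod (\<phi> (f c)) \<le> M" using bd M_def by simp
      then have "cmod (\<phi> (f c)) = M" using M0 by simp
      then have "\<phi> (f x) = \<phi> (f c)" using key[OF lin bd] x by blast
      also have "\<phi> (f c) = 0" using \<open>cmod (\<phi> (f c)) = M\<close> M0 by simp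
      finally show False using \<phi>x ne by simp
    qed
    have c1: "\<forall>x\<in>\<Omega>. p (f c) \<le> p (f x)" using allz c_in p_nn by simp
    obtain d where d: "p d \<noteq> 0" using p_nonzero by blast
    then have dpos: "p d > 0" using p_nn[of d] by simp
    define H where "H = {y. p y = 0}"
    have "closedin (lcs_topology I P) {x \<in> topspace (lcs_topology I P). p x \<in> {0}}"
      by (rule closedin_continuous_map_preimage[OF p_cont]) simp
    then have clH: "closedin (lcs_topology I P) H" by (simp add: topspace_lcs H_def)
    have "f ` \<Omega> \<subseteq> H" using allz by (auto simp: H_def)
    then have cl: "(lcs_topology I P) closure_of (f ` \<Omega>) \<subseteq> H" using clH by (rule closure_of_minimal)
    have c2: "(lcs_topology I P) interior_of ((lcs_topology I P) closure_of (f ` \<Omega>)) = {}"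
    proof (rule nowhere[OF snI _ openin_interior_of, of _ H d])
      show "(lcs_topology I P) interior_of ((lcs_topology I P) closure_of (f ` \<Omega>)) \<subseteq> H"
        by (rule subset_trans[OF interior_of_subset cl])
      fix y \<epsilon> assume y: "y \<in> H" and \<epsilon>: "(\<epsilon>::real) > 0"
      have eq: "sY (of_real \<epsilon>) d = (y + sY (of_real \<epsilon>) d) + sY (-1) y" by simp
      have "p (sY (of_real \<epsilon>) d) = p ((y + sY (of_real \<epsilon>) d) + sY (-1) y)" using eq by (rule arg_cong)
      also have "\<dots> \<le> p (y + sY (of_real \<epsilon>) d) + p (sY (-1) y)" by (rule p_tr)
      finally have "p (sY (of_real \<epsilon>) d) \<le> p (y + sY (of_real \<epsilon>) d) + p (sY (-1) y)" .
      moreover have "p (sY (-1) y) = 0" using y p_sc[of "-1" y] by (simp add: H_def)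
      moreover have "p (sY (of_real \<epsilon>) d) = \<epsilon> * p d" using p_sc \<epsilon> by simp
      ultimately have "p (y + sY (of_real \<epsilon>) d) \<ge> \<epsilon> * p d" by simp
      moreover have "\<epsilon> * p d > 0" using \<epsilon> dpos by simp
      ultimately show "y + sY (of_real \<epsilon>) d \<notin> H" by (simp add: H_def)
    qed
    show ?thesis by (intro conjI c1 c2 impI) (use False M_def in simp)
  qed
qed


end
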